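(* Let $\mathbf S$ be an SRRW in $\mathbb{R}^d$ with parameter $\alpha\in[0,1)$ and step distribution $\mu$ satisfying $\mathbb E\|\mathbf X_1\|<\infty$ and $\mathbb E\mathbf X_1=\mathbf 0$, and let $h$ be $\mu$-integrable. For $n\ge1$ put $\gamma_n:=\frac{1-\alpha}{n+1}$ and $\beta_n:=\prod_{k=1}^{n-1}(1-\gamma_k)$ (with $\beta_1=1$), and for $j\ge1$ $$\epsilon_{j+1}(h):=\frac{h(\mathbf X_{j+1})-\mathbb E h(\mathbf X_1)-\alpha\Delta_j(h)}{1-\alpha}.$$ Then $(\epsilon_{j+1}(h))_{j\ge1}$ is a martingale difference sequence with respect to $(\mathcal F_{j+1})_{j\ge1}$, and $$\Delta_n(h)=\beta_n\Big(h(\mathbf X_1)+\sum_{j=1}^{n-1}\frac{\gamma_j}{\beta_{j+1}}\epsilon_{j+1}(h)\Big),\quad n\ge1.$$ In particular, for all $n>k\ge1$, $\mathbb E(\Delta_n(h)\mid\mathcal F_k)=\frac{\beta_n}{\beta_k}\Delta_k(h)$.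
   Context: SRRW: $\mu$ a probability measure on $\mathbb{R}^d$, $\alpha\in[0,1]$; $(\xi_n)_{n\ge2}$ i.i.d. Bernoulli($\alpha$), $(U[n])_{n\ge1}$ independent with $U[n]$ uniform on $\{1,\dots,n\}$. Sample $\mathbf X_1\sim\mu$; for $n\ge1$, if $\xi_{n+1}=1$ set $\mathbf X_{n+1}=\mathbf X_{U[n]}$, else sample $\mathbf X_{n+1}\sim\mu$ independently. $\mathbf S_n=\sum_{i\le n}\mathbf X_i$, $\mathcal F_n=\sigma(\mathbf X_1,\dots,\mathbf X_n)$. For $\mu$-integrable $g$, $\Delta_n(g):=\frac1n\sum_{i=1}^n g(\mathbf X_i)-\mathbb E g(\mathbf X_1)$. *)

theory Defs
  imports "HOL-Probability.Probability"
begin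

text \<open>Driving randomness of the SRRW: Y n (n >= 1) are i.i.d. samples from mu
  (Y 1 = X_1, Y (n+1) is the fresh sample used at step n+1), xi n (n >= 2) are the
  Bernoulli(alpha) coins, U n (n >= 1) uniform on {1..n}.
  srrw_hist gives the list [X_1, ..., X_n].\<close>

fun srrw_hist :: "(nat \<Rightarrow> 'w \<Rightarrow> 'v) \<Rightarrow> (nat \<Rightarrow> 'w \<Rightarrow> bool) \<Rightarrow> (nat \<Rightarrow> 'w \<Rightarrow> nat)
    \<Rightarrow> nat \<Rightarrow> 'w \<Rightarrow> 'v list" where
  "srrw_hist Y xi U 0 w = []"
| "srrw_hist Y xi U (Suc n) w =
     (let xs = srrw_hist Y xi U n w in
      xs @ [if n = 0 then Y 1 w
            else if xi (Suc n) w then xs ! (U n w - 1) else Y (Suc n) w])"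

text \<open>X_n for n >= 1 (X 0 is a meaningless default).\<close>
definition srrw_X :: "(nat \<Rightarrow> 'w \<Rightarrow> 'v) \<Rightarrow> (nat \<Rightarrow> 'w \<Rightarrow> bool) \<Rightarrow> (nat \<Rightarrow> 'w \<Rightarrow> nat)
    \<Rightarrow> nat \<Rightarrow> 'w \<Rightarrow> 'v" where
  "srrw_X Y xi U n w = srrw_hist Y xi U n w ! (n - 1)"

definition srrw_index :: "(nat + nat + nat) set" where
  "srrw_index = Inl ` {1..} \<union> Inr ` Inl ` {2..} \<union> Inr ` Inr ` {1..}"

definition srrw_drivers_indep ::
  "'w measure \<Rightarrow> (nat \<Rightarrow> 'w \<Rightarrow> 'v::topological_space) \<Rightarrow> (nat \<Rightarrow> 'w \<Rightarrow> bool) \<Rightarrow> (nat \<Rightarrow> 'w \<Rightarrow> nat) \<Rightarrow> bool" where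
  "srrw_drivers_indep M Y xi U =
     prob_space.indep_sets M
       (\<lambda>i. case i of
              Inl n \<Rightarrow> {Y n -` A \<inter> space M | A. A \<in> sets borel}
            | Inr (Inl n) \<Rightarrow> {xi n -` A \<inter> space M | A. True}
            | Inr (Inr n) \<Rightarrow> {U n -` A \<inter> space M | A. True})
       srrw_index"

definition nat_filtration :: "'w measure \<Rightarrow> (nat \<Rightarrow> 'w \<Rightarrow> 'v::topological_space) \<Rightarrow> nat \<Rightarrow> 'w measure" where
  "nat_filtration M X n =
     sigma (space M) {X i -` A \<inter> space M | i A. i \<in> {1..n} \<and> A \<in> sets borel}"

definition srrw_Delta :: "'v measure \<Rightarrow> ('v \<Rightarrow> real) \<Rightarrow> (nat \<Rightarrow> 'w \<Rightarrow> 'v) \<Rightarrow> nat \<Rightarrow> 'w \<Rightarrow> real" where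
  "srrw_Delta mu g X n w = (\<Sum>i=1..n. g (X i w)) / real n - integral\<^sup>L mu g"

definition srrw_gamma :: "real \<Rightarrow> nat \<Rightarrow> real" where
  "srrw_gamma \<alpha> n = (1 - \<alpha>) / (real n + 1)"

definition srrw_beta :: "real \<Rightarrow> nat \<Rightarrow> real" where
  "srrw_beta \<alpha> n = (\<Prod>k\<in>{1..<n}. 1 - srrw_gamma \<alpha> k)"

definition mart_diff_seq :: "'w measure \<Rightarrow> (nat \<Rightarrow> 'w measure) \<Rightarrow> (nat \<Rightarrow> 'w \<Rightarrow> real) \<Rightarrow> bool" where
  "mart_diff_seq M F e =
     (\<forall>j\<ge>1. e (j+1) \<in> borel_measurable (F (j+1)) \<and> integrable M (e (j+1)) \<and>
            (AE w in M. real_cond_exp M (F j) (e (j+1)) w = 0))"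

end

theory Submission
  imports Defs
begin
lemma hist_len[simp]: "length (srrw_hist Y xi U n w) = n"
  by (induction n) (auto simp: Let_def)

lemma nth_beyond: "length xs \<le> m \<Longrightarrow> xs ! m = [] ! (m - length xs)"
proof (induction xs arbitrary: m)
  case Nil then show ?case by simp
next
  case (Cons a xs) then show ?case by (cases m) auto
qed

lemma X_1: "srrw_X Y xi U 1 w = Y 1 w"
  by (simp add: srrw_X_def)

lemma X_Suc: "n \<ge> 1 \<Longrightarrow> srrw_X Y xi U (Suc n) w =
  (if xi (Suc n) w then srrw_hist Y xi U n w ! (U n w - 1) else Y (Suc n) w)"
  by (simp add: srrw_X_def Let_def nth_append)

lemma hist_nth: "srrw_hist Y xi U n w ! k = (if k < n then srrw_X Y xi U (Suc k) w else [] ! (k - n))"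
proof (induction n arbitrary: k)
  case 0 then show ?case by simp
next
  case (Suc n)
  show ?case
  proof (cases "k < n")
    case True then show ?thesis using Suc.IH[of k] by (simp add: Let_def nth_append)
  next
    case False
    show ?thesis
    proof (cases "k = n")
      case True then show ?thesis by (simp add: srrw_X_def)
    next
      case False
      with \<open>\<not> k < n\<close> have "k > n" by simp
      then have "Suc n \<le> k" by simp
      then show ?thesis using nth_beyond[of "srrw_hist Y xi U (Suc n) w" k] hist_len[of Y xi U "Suc n" w] by (simp del: srrw_hist.simps hist_len)
    qed
  qed
qed

definition drvE :: "'w measure \<Rightarrow> (nat \<Rightarrow> 'w \<Rightarrow> 'v::topological_space) \<Rightarrow> (nat \<Rightarrow> 'w \<Rightarrow> bool)
   \<Rightarrow> (nat \<Rightarrow> 'w \<Rightarrow> nat) \<Rightarrow> nat + nat + nat \<Rightarrow> 'w set set" where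
  "drvE M Y xi U = (\<lambda>i. case i of
              Inl n \<Rightarrow> {Y n -` A \<inter> space M | A. A \<in> sets borel}
            | Inr (Inl n) \<Rightarrow> {xi n -` A \<inter> space M | A. True}
            | Inr (Inr n) \<Rightarrow> {U n -` A \<inter> space M | A. True})"

definition past :: "nat \<Rightarrow> (nat + nat + nat) set" where
  "past j = Inl ` {1..j} \<union> Inr ` Inl ` {2..j} \<union> Inr ` Inr ` {1..<j}"

lemma past_sub: "past j \<subseteq> srrw_index"
  unfolding past_def srrw_index_def by auto

lemma Int_stable_pre: "(\<And>A B. P A \<Longrightarrow> P B \<Longrightarrow> P (A \<inter> B)) \<Longrightarrow> Int_stable {f -` A \<inter> S | A. P A}"
proof (clarsimp simp: Int_stable_def)
  fix A B assume "\<And>A B. P A \<Longrightarrow> P B \<Longrightarrow> P (A \<inter> B)" "P A" "P B"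
  then show "\<exists>C. f -` A \<inter> S \<inter> (f -` B \<inter> S) = f -` C \<inter> S \<and> P C"
    by (intro exI[of _ "A \<inter> B"]) auto
qed

locale srrw_loc = prob_space M for M :: "'w measure" +
  fixes \<mu> :: "'v::topological_space measure" and \<alpha> :: real
    and Y :: "nat \<Rightarrow> 'w \<Rightarrow> 'v" and \<xi> :: "nat \<Rightarrow> 'w \<Rightarrow> bool" and U :: "nat \<Rightarrow> 'w \<Rightarrow> nat"
    and h :: "'v \<Rightarrow> real"
  assumes \<alpha>0: "0 \<le> \<alpha>" and \<alpha>1: "\<alpha> < 1"
    and Y_meas: "\<And>n. n \<ge> 1 \<Longrightarrow> Y n \<in> borel_measurable M"
    and \<xi>_meas: "\<And>n. n \<ge> 2 \<Longrightarrow> \<xi> n \<in> measurable M (count_space UNIV)"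
    and U_meas: "\<And>n. n \<ge> 1 \<Longrightarrow> U n \<in> measurable M (count_space UNIV)"
    and Y_distr: "\<And>n. n \<ge> 1 \<Longrightarrow> distr M borel (Y n) = \<mu>"
    and \<xi>_distr: "\<And>n. n \<ge> 2 \<Longrightarrow> distr M (count_space UNIV) (\<xi> n) = measure_pmf (bernoulli_pmf \<alpha>)"
    and U_distr: "\<And>n. n \<ge> 1 \<Longrightarrow> distr M (count_space UNIV) (U n) = measure_pmf (pmf_of_set {1..n})"
    and indep: "indep_sets (drvE M Y \<xi> U) srrw_index"
    and h: "integrable \<mu> h"
begin

abbreviation "X \<equiv> srrw_X Y \<xi> U"
abbreviation "E \<equiv> drvE M Y \<xi> U"
definition Sig :: "(nat + nat + nat) set \<Rightarrow> 'w measure" where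
  "Sig I = sigma (space M) (\<Union>i\<in>I. E i)"

lemma E_pow: "E i \<subseteq> Pow (space M)"
  unfolding drvE_def by (auto split: sum.split)

lemma E_events: "i \<in> srrw_index \<Longrightarrow> E i \<subseteq> events"
  using indep unfolding indep_sets_def by auto

lemma sets_Sig: "sets (Sig I) = sigma_sets (space M) (\<Union>i\<in>I. E i)"
  unfolding Sig_def using E_pow by (intro sets_measure_of) auto

lemma space_Sig[simp]: "space (Sig I) = space M"
  unfolding Sig_def using E_pow by (intro space_measure_of) auto

lemma E_in_Sig: "i \<in> I \<Longrightarrow> S \<in> E i \<Longrightarrow> S \<in> sets (Sig I)"
  unfolding sets_Sig by auto

lemma Sig_mono: "I \<subseteq> J \<Longrightarrow> sets (Sig I) \<subseteq> sets (Sig J)"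
  unfolding sets_Sig by (intro sigma_sets_mono') auto

lemma Sig_subalg: "I \<subseteq> srrw_index \<Longrightarrow> subalgebra M (Sig I)"
  unfolding subalgebra_def
proof safe
  assume "I \<subseteq> srrw_index"
  then have "(\<Union>i\<in>I. E i) \<subseteq> sets M" using E_events by blast
  then show "x \<in> sets M" if "x \<in> sets (Sig I)" for x
    using that sigma_sets_le_sets_iff[of M "\<Union>i\<in>I. E i"] unfolding sets_Sig by blast
qed auto

lemma Y_Sig: "Inl n \<in> I \<Longrightarrow> Y n \<in> borel_measurable (Sig I)"
proof (rule measurableI)
  fix A :: "'v set" assume "Inl n \<in> I" "A \<in> sets borel"
  then show "Y n -` A \<inter> space (Sig I) \<in> sets (Sig I)"
    by (intro E_in_Sig[of "Inl n"]) (auto simp: drvE_def)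
qed auto

lemma \<xi>_Sig: "Inr (Inl n) \<in> I \<Longrightarrow> \<xi> n \<in> measurable (Sig I) (count_space UNIV)"
proof (rule measurableI)
  fix A :: "bool set" assume "Inr (Inl n) \<in> I"
  then show "\<xi> n -` A \<inter> space (Sig I) \<in> sets (Sig I)"
    by (intro E_in_Sig[of "Inr (Inl n)"]) (auto simp: drvE_def)
qed auto

lemma U_Sig: "Inr (Inr n) \<in> I \<Longrightarrow> U n \<in> measurable (Sig I) (count_space UNIV)"
proof (rule measurableI)
  fix A :: "nat set" assume "Inr (Inr n) \<in> I"
  then show "U n -` A \<inter> space (Sig I) \<in> sets (Sig I)"
    by (intro E_in_Sig[of "Inr (Inr n)"]) (auto simp: drvE_def)
qed auto

lemma X_Sig: "1 \<le> i \<Longrightarrow> i \<le> j \<Longrightarrow> X i \<in> borel_measurable (Sig (past j))"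
proof (induction i rule: less_induct)
  case (less i)
  show ?case
  proof (cases "i = 1")
    case True
    have "Inl 1 \<in> past j" using less.prems unfolding past_def by auto
    have "X i = Y 1" unfolding True by (rule ext) (rule X_1)
    then show ?thesis using Y_Sig[OF \<open>Inl 1 \<in> past j\<close>] by simp
  next
    case False
    then obtain n where n: "i = Suc n" "n \<ge> 1" using less.prems by (cases i) auto
    have U: "U n \<in> measurable (Sig (past j)) (count_space UNIV)"
      by (rule U_Sig) (use n less.prems in \<open>auto simp: past_def\<close>)
    have f: "(\<lambda>w. srrw_hist Y \<xi> U n w ! (k - 1)) \<in> borel_measurable (Sig (past j))" for k
    proof (cases "k - 1 < n")
      case True
      then show ?thesis using less.IH[of "Suc (k - 1)"] n less.prems by (simp add: hist_nth)
    next
      case False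
      then show ?thesis by (simp add: hist_nth)
    qed
    have H: "(\<lambda>w. srrw_hist Y \<xi> U n w ! (U n w - 1)) \<in> borel_measurable (Sig (past j))"
      using measurable_compose_countable[where f="\<lambda>k w. srrw_hist Y \<xi> U n w ! (k - 1)", OF f U] by simp
    have Yn: "Y (Suc n) \<in> borel_measurable (Sig (past j))"
      by (rule Y_Sig) (use n less.prems in \<open>auto simp: past_def\<close>)
    have "\<xi> (Suc n) \<in> measurable (Sig (past j)) (count_space UNIV)"
      by (rule \<xi>_Sig) (use n less.prems in \<open>auto simp: past_def\<close>)
    then have "\<xi> (Suc n) -` {True} \<inter> space (Sig (past j)) \<in> sets (Sig (past j))"
      by (rule measurable_sets) auto
    moreover have "{w \<in> space (Sig (past j)). \<xi> (Suc n) w} = \<xi> (Suc n) -` {True} \<inter> space (Sig (past j))"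
      by auto
    ultimately have S: "{w \<in> space (Sig (past j)). \<xi> (Suc n) w} \<in> sets (Sig (past j))" by simp
    have "X i = (\<lambda>w. if \<xi> (Suc n) w then srrw_hist Y \<xi> U n w ! (U n w - 1) else Y (Suc n) w)"
    proof (rule ext)
      fix w show "X i w = (if \<xi> (Suc n) w then srrw_hist Y \<xi> U n w ! (U n w - 1) else Y (Suc n) w)"
        using X_Suc[OF n(2), of Y \<xi> U w] n(1) by simp
    qed
    then show ?thesis using measurable_If[OF H Yn S] by simp
  qed
qed

lemma X_M: "1 \<le> i \<Longrightarrow> X i \<in> borel_measurable M"
  using X_Sig[of i i] Sig_subalg[OF past_sub] measurable_from_subalg by blast

lemma h_borel: "h \<in> borel_measurable borel"
proof -
  have "sets \<mu> = sets borel" using Y_distr[of 1] by (metis le_refl sets_distr)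
  then show ?thesis using borel_measurable_integrable[OF h] measurable_cong_sets by blast
qed

lemma hX_Sig: "1 \<le> i \<Longrightarrow> i \<le> j \<Longrightarrow> (\<lambda>w. h (X i w)) \<in> borel_measurable (Sig (past j))"
  using measurable_compose[OF X_Sig h_borel] by blast

lemma hX_M: "1 \<le> i \<Longrightarrow> (\<lambda>w. h (X i w)) \<in> borel_measurable M"
  using measurable_compose[OF X_M h_borel] by blast

lemma hY_int: "n \<ge> 1 \<Longrightarrow> integrable M (\<lambda>w. h (Y n w))"
  using integrable_distr_eq[OF Y_meas h_borel, of n] Y_distr[of n] h by simp

lemma hY_integral: "n \<ge> 1 \<Longrightarrow> (\<integral>w. h (Y n w) \<partial>M) = integral\<^sup>L \<mu> h"
  using integral_distr[OF Y_meas h_borel, of n] Y_distr[of n] by simp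

lemma U_range: "n \<ge> 1 \<Longrightarrow> AE w in M. U n w \<in> {1..n}"
proof -
  assume n: "n \<ge> 1"
  have "AE x in distr M (count_space UNIV) (U n). x \<in> {1..n}"
    using n by (simp only: U_distr[OF n]) (simp add: AE_measure_pmf_iff set_pmf_of_set)
  then show ?thesis using AE_distrD[OF U_meas[OF n]] by blast
qed

lemma prob_\<xi>: "n \<ge> 2 \<Longrightarrow> prob (\<xi> n -` {True} \<inter> space M) = \<alpha>"
  using measure_distr[OF \<xi>_meas, of n "{True}"] \<xi>_distr[of n] \<alpha>0 \<alpha>1
  by (simp add: measure_pmf_single)

lemma prob_U: "n \<ge> 1 \<Longrightarrow> k \<in> {1..n} \<Longrightarrow> prob (U n -` {k} \<inter> space M) = 1 / n"
  using measure_distr[OF U_meas, of n "{k}"] U_distr[of n]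
  by (simp add: measure_pmf_single)

end

context srrw_loc
begin

lemma ind_int: "A \<in> sets M \<Longrightarrow> integrable M (indicator A :: 'w \<Rightarrow> real)"
  by (intro integrable_real_indicator) (auto simp: less_top[symmetric])

lemma indep_mult:
  fixes f g :: "'w \<Rightarrow> real"
  assumes I: "I1 \<inter> I2 = {}" "I1 \<subseteq> srrw_index" "I2 \<subseteq> srrw_index"
    and f: "f \<in> borel_measurable (Sig I1)" and g: "g \<in> borel_measurable (Sig I2)"
    and fi: "integrable M f" and gi: "integrable M g"
  shows "(\<integral>w. f w * g w \<partial>M) = (\<integral>w. f w \<partial>M) * (\<integral>w. g w \<partial>M)"
    and "integrable M (\<lambda>w. f w * g w)"
proof -
  let ?I = "\<lambda>b::bool. if b then I1 else I2"
  have ind: "indep_sets (\<lambda>b. sigma_sets (space M) (\<Union>i\<in>?I b. E i)) UNIV"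
  proof (rule indep_sets_collect_sigma)
    show "indep_sets E (\<Union>b\<in>UNIV. ?I b)"
      by (rule indep_sets_mono_index[OF _ indep]) (use I in auto)
    show "Int_stable (E i)" if "i \<in> ?I b" for i b
    proof (cases i)
      case (Inl n) show ?thesis unfolding Inl drvE_def sum.case by (rule Int_stable_pre) auto
    next
      case (Inr r) show ?thesis
      proof (cases r)
        case (Inl m) show ?thesis unfolding \<open>i = Inr r\<close> Inl drvE_def sum.case by (rule Int_stable_pre) auto
      next
        case (Inr m) show ?thesis unfolding \<open>i = Inr r\<close> Inr drvE_def sum.case by (rule Int_stable_pre) auto
      qed
    qed
    show "disjoint_family_on ?I UNIV"
      using I unfolding disjoint_family_on_def by auto
  qed
  have fM: "f \<in> borel_measurable M" using measurable_from_subalg[OF Sig_subalg[OF I(2)] f] .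
  have gM: "g \<in> borel_measurable M" using measurable_from_subalg[OF Sig_subalg[OF I(3)] g] .
  have sub1: "sigma_sets (space M) {f -` A \<inter> space M |A. A \<in> sets borel} \<subseteq> sigma_sets (space M) (\<Union>i\<in>I1. E i)"
  proof -
    have "{f -` A \<inter> space M |A. A \<in> sets borel} \<subseteq> sets (Sig I1)"
      using measurable_sets[OF f] by auto
    then show ?thesis using sigma_sets_le_sets_iff[of "Sig I1"] by (simp add: sets_Sig)
  qed
  have sub2: "sigma_sets (space M) {g -` A \<inter> space M |A. A \<in> sets borel} \<subseteq> sigma_sets (space M) (\<Union>i\<in>I2. E i)"
  proof -
    have "{g -` A \<inter> space M |A. A \<in> sets borel} \<subseteq> sets (Sig I2)"
      using measurable_sets[OF g] by auto
    then show ?thesis using sigma_sets_le_sets_iff[of "Sig I2"] by (simp add: sets_Sig)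
  qed
  have iv: "indep_var borel f borel g"
    unfolding indep_var_def indep_vars_def
  proof
    show "\<forall>i\<in>UNIV. random_variable (case_bool borel borel i) (case_bool f g i)"
      using fM gM by (auto split: bool.split)
    show "indep_sets (\<lambda>i. sigma_sets (space M) {case_bool f g i -` A \<inter> space M |A. A \<in> sets (case_bool borel borel i)}) UNIV"
    proof (rule indep_sets_mono_sets[OF ind])
      fix b :: bool
      show "sigma_sets (space M) {case_bool f g b -` A \<inter> space M |A. A \<in> sets (case_bool borel borel b)} \<subseteq> sigma_sets (space M) (\<Union>i\<in>?I b. E i)"
        using sub1 sub2 by (cases b) auto
    qed
  qed
  show "(\<integral>w. f w * g w \<partial>M) = (\<integral>w. f w \<partial>M) * (\<integral>w. g w \<partial>M)"
    by (rule indep_var_lebesgue_integral[OF iv fi gi])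
  show "integrable M (\<lambda>w. f w * g w)"
    by (rule indep_var_integrable[OF iv fi gi])
qed

definition SX :: "nat \<Rightarrow> 'w set" where "SX j = \<xi> (Suc j) -` {True} \<inter> space M"
definition SU :: "nat \<Rightarrow> nat \<Rightarrow> 'w set" where "SU j k = U j -` {k} \<inter> space M"
definition R :: "nat \<Rightarrow> 'w \<Rightarrow> real" where
  "R j w = (\<Sum>k\<in>{1..j}. h (X k w) * indicator (SU j k) w) * indicator (SX j) w
           + h (Y (Suc j) w) * indicator (space M - SX j) w"

lemma SX_Sig: "Inr (Inl (Suc j)) \<in> I \<Longrightarrow> SX j \<in> sets (Sig I)"
  by (rule E_in_Sig[of "Inr (Inl (Suc j))"]) (auto simp: drvE_def SX_def)

lemma SU_Sig: "Inr (Inr j) \<in> I \<Longrightarrow> SU j k \<in> sets (Sig I)"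
  by (rule E_in_Sig[of "Inr (Inr j)"]) (auto simp: drvE_def SU_def)

lemma Sig_sets_M: "I \<subseteq> srrw_index \<Longrightarrow> S \<in> sets (Sig I) \<Longrightarrow> S \<in> sets M"
  using Sig_subalg unfolding subalgebra_def by blast

lemma SX_M: "j \<ge> 1 \<Longrightarrow> SX j \<in> sets M"
  by (rule Sig_sets_M[of "{Inr (Inl (Suc j))}"]) (auto simp: srrw_index_def intro!: SX_Sig)

lemma SU_M: "j \<ge> 1 \<Longrightarrow> SU j k \<in> sets M"
  by (rule Sig_sets_M[of "{Inr (Inr j)}"]) (auto simp: srrw_index_def intro!: SU_Sig)

lemma rep: assumes j: "j \<ge> 1" shows "AE w in M. h (X (Suc j) w) = R j w"
proof (rule AE_mp[OF U_range[OF j]], rule AE_I2, rule impI)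
  fix w assume w: "w \<in> space M" and u: "U j w \<in> {1..j}"
  have sum: "(\<Sum>k\<in>{1..j}. h (X k w) * indicator (SU j k) w) = h (X (U j w) w)"
  proof -
    have "(\<Sum>k\<in>{1..j}. h (X k w) * indicator (SU j k) w) = (\<Sum>k\<in>{1..j}. if k = U j w then h (X k w) else 0)"
      by (rule sum.cong) (auto simp: SU_def indicator_def w)
    also have "\<dots> = h (X (U j w) w)" using u by simp
    finally show ?thesis .
  qed
  have "U j w - 1 < j" "Suc (U j w - 1) = U j w" using u by auto
  then have "srrw_hist Y \<xi> U j w ! (U j w - 1) = X (U j w) w"
    by (simp add: hist_nth)
  then have X: "X (Suc j) w = (if \<xi> (Suc j) w then X (U j w) w else Y (Suc j) w)"
    using X_Suc[OF j, of Y \<xi> U w] by simp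
  show "h (X (Suc j) w) = R j w"
    unfolding R_def sum X using w by (simp add: SX_def indicator_def)
qed

lemma hX_int: "n \<ge> 1 \<Longrightarrow> integrable M (\<lambda>w. h (X n w))"
proof (induction n rule: less_induct)
  case (less n)
  show ?case
  proof (cases "n = 1")
    case True
    have "X n = Y 1" unfolding True by (rule ext) (rule X_1)
    then show ?thesis using hY_int[of 1] by simp
  next
    case False
    then obtain j where j: "n = Suc j" "j \<ge> 1" using less.prems by (cases n) auto
    have i1: "integrable M (\<lambda>w. (\<Sum>k\<in>{1..j}. h (X k w) * indicator (SU j k) w) * indicator (SX j) w)"
      by (intro integrable_real_mult_indicator SX_M j Bochner_Integration.integrable_sum SU_M less.IH)
        (use j in auto)
    have i2: "integrable M (\<lambda>w. h (Y (Suc j) w) * indicator (space M - SX j) w)"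
      by (intro integrable_real_mult_indicator hY_int sets.Diff sets.top SX_M j) simp
    have iR: "integrable M (R j)" unfolding R_def using Bochner_Integration.integrable_add[OF i1 i2] by simp
    show ?thesis
      using integrable_cong_AE[OF hX_M borel_measurable_integrable[OF iR] rep[OF j(2)]] iR j by simp
  qed
qed

lemma R_int: assumes j: "j \<ge> 1" shows "integrable M (R j)"
proof -
  have i1: "integrable M (\<lambda>w. (\<Sum>k\<in>{1..j}. h (X k w) * indicator (SU j k) w) * indicator (SX j) w)"
    by (intro integrable_real_mult_indicator SX_M j Bochner_Integration.integrable_sum SU_M hX_int)
      (use j in auto)
  have i2: "integrable M (\<lambda>w. h (Y (Suc j) w) * indicator (space M - SX j) w)"
    by (intro integrable_real_mult_indicator hY_int sets.Diff sets.top SX_M j) simp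
  show ?thesis unfolding R_def using Bochner_Integration.integrable_add[OF i1 i2] by simp
qed

end

context srrw_loc
begin

lemma prob_SX: "j \<ge> 1 \<Longrightarrow> prob (SX j) = \<alpha>"
  unfolding SX_def by (rule prob_\<xi>) simp

lemma prob_SU: "j \<ge> 1 \<Longrightarrow> k \<in> {1..j} \<Longrightarrow> prob (SU j k) = 1 / j"
  unfolding SU_def by (rule prob_U)

lemma int_ind: "S \<in> sets M \<Longrightarrow> (\<integral>w. indicator S w \<partial>M) = prob S"
  using sets.sets_into_space[of S M] by (simp add: Int_absorb2)

lemma key:
  assumes j: "j \<ge> 1" and A: "A \<in> sets (Sig (past j))"
  shows "(\<integral>w. h (X (Suc j) w) * indicator A w \<partial>M)
       = \<alpha> / j * (\<Sum>k\<in>{1..j}. \<integral>w. h (X k w) * indicator A w \<partial>M) + (1 - \<alpha>) * prob A * integral\<^sup>L \<mu> h"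
proof -
  have AM: "A \<in> sets M" using Sig_sets_M[OF past_sub A] .
  have SXM: "SX j \<in> sets M" using SX_M[OF j] .
  have CM: "space M - SX j \<in> sets M" using SXM by auto
  define g where "g k w = (indicator (SU j k) w * indicator (SX j) w :: real)" for k w
  define fk where "fk k w = h (X k w) * indicator A w" for k w
  have fk_meas: "fk k \<in> borel_measurable (Sig (past j))" if "k \<in> {1..j}" for k
    unfolding fk_def using that
    by (intro borel_measurable_times hX_Sig borel_measurable_indicator A) auto
  have fk_int: "integrable M (fk k)" if "k \<in> {1..j}" for k
    unfolding fk_def using that by (intro integrable_real_mult_indicator AM hX_int) auto
  have I2: "{Inr (Inr j), Inr (Inl (Suc j))} \<subseteq> srrw_index" using j by (auto simp: srrw_index_def)
  have g_meas: "g k \<in> borel_measurable (Sig {Inr (Inr j), Inr (Inl (Suc j))})" for k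
    unfolding g_def by (intro borel_measurable_times borel_measurable_indicator SU_Sig SX_Sig) auto
  have g_int: "integrable M (g k)" for k
    unfolding g_def by (intro integrable_real_mult_indicator ind_int SXM SU_M j)
  have g_val: "(\<integral>w. g k w \<partial>M) = 1 / j * \<alpha>" if "k \<in> {1..j}" for k
  proof -
    have "(\<integral>w. g k w \<partial>M) = (\<integral>w. indicator (SU j k) w \<partial>M) * (\<integral>w. indicator (SX j) w \<partial>M)"
      unfolding g_def
      by (rule indep_mult(1)[of "{Inr (Inr j)}" "{Inr (Inl (Suc j))}"]) (use j in \<open>auto simp: srrw_index_def intro!: borel_measurable_indicator SU_Sig SX_Sig ind_int SU_M SX_M\<close>)
    also have "\<dots> = 1 / j * \<alpha>" using that j by (simp add: int_ind SU_M SX_M prob_SU prob_SX)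
    finally show ?thesis .
  qed
  have term1: "(\<integral>w. fk k w * g k w \<partial>M) = (\<integral>w. fk k w \<partial>M) * (1 / j * \<alpha>)" if "k \<in> {1..j}" for k
  proof -
    have "(\<integral>w. fk k w * g k w \<partial>M) = (\<integral>w. fk k w \<partial>M) * (\<integral>w. g k w \<partial>M)"
      by (rule indep_mult(1)[OF _ past_sub I2 fk_meas[OF that] g_meas fk_int[OF that] g_int])
        (auto simp: past_def)
    then show ?thesis using g_val[OF that] by simp
  qed
  have int1: "integrable M (\<lambda>w. fk k w * g k w)" if "k \<in> {1..j}" for k
    by (rule indep_mult(2)[OF _ past_sub I2 fk_meas[OF that] g_meas fk_int[OF that] g_int])
        (auto simp: past_def)
  define q where "q w = (indicator A w * indicator (space M - SX j) w :: real)" for w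
  have I3: "past j \<union> {Inr (Inl (Suc j))} \<subseteq> srrw_index" using j past_sub by (auto simp: srrw_index_def)
  have q_meas: "q \<in> borel_measurable (Sig (past j \<union> {Inr (Inl (Suc j))}))"
  proof -
    have "A \<in> sets (Sig (past j \<union> {Inr (Inl (Suc j))}))" using Sig_mono[of "past j"] A by blast
    moreover have "space M - SX j \<in> sets (Sig (past j \<union> {Inr (Inl (Suc j))}))"
      using sets.compl_sets[OF SX_Sig[of j "past j \<union> {Inr (Inl (Suc j))}"]] by simp
    ultimately show ?thesis unfolding q_def by (intro borel_measurable_times borel_measurable_indicator)
  qed
  have q_int: "integrable M q" unfolding q_def by (intro integrable_real_mult_indicator ind_int AM CM)
  have q_val: "(\<integral>w. q w \<partial>M) = prob A * (1 - \<alpha>)"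
  proof -
    have "(\<integral>w. q w \<partial>M) = (\<integral>w. indicator A w \<partial>M) * (\<integral>w. indicator (space M - SX j) w \<partial>M)"
      unfolding q_def
    proof (rule indep_mult(1)[of "past j" "{Inr (Inl (Suc j))}"])
      show "indicator (space M - SX j) \<in> borel_measurable (Sig {Inr (Inl (Suc j))})"
        using sets.compl_sets[OF SX_Sig[of j "{Inr (Inl (Suc j))}"]] by simp
    qed (use j A AM CM past_sub in \<open>auto simp: past_def srrw_index_def intro!: ind_int\<close>)
    also have "\<dots> = prob A * (1 - \<alpha>)" using AM CM SXM j by (simp add: int_ind prob_compl prob_SX)
    finally show ?thesis .
  qed
  have hY_meas: "(\<lambda>w. h (Y (Suc j) w)) \<in> borel_measurable (Sig {Inl (Suc j)})"
    using measurable_compose[OF Y_Sig[of "Suc j" "{Inl (Suc j)}"] h_borel] by simp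
  have term2: "(\<integral>w. q w * h (Y (Suc j) w) \<partial>M) = prob A * (1 - \<alpha>) * integral\<^sup>L \<mu> h"
  proof -
    have "(\<integral>w. q w * h (Y (Suc j) w) \<partial>M) = (\<integral>w. q w \<partial>M) * (\<integral>w. h (Y (Suc j) w) \<partial>M)"
      by (rule indep_mult(1)[OF _ I3 _ q_meas hY_meas q_int hY_int])
        (auto simp: past_def srrw_index_def)
    then show ?thesis using q_val hY_integral[of "Suc j"] by simp
  qed
  have int2: "integrable M (\<lambda>w. q w * h (Y (Suc j) w))"
    by (rule indep_mult(2)[OF _ I3 _ q_meas hY_meas q_int hY_int])
        (auto simp: past_def srrw_index_def)
  have "(\<integral>w. h (X (Suc j) w) * indicator A w \<partial>M) = (\<integral>w. R j w * indicator A w \<partial>M)"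
  proof (rule integral_cong_AE)
    show "(\<lambda>w. h (X (Suc j) w) * indicator A w) \<in> borel_measurable M"
      by (intro borel_measurable_times hX_M borel_measurable_indicator AM) simp
    show "(\<lambda>w. R j w * indicator A w) \<in> borel_measurable M"
      by (intro borel_measurable_times borel_measurable_integrable[OF R_int[OF j]] borel_measurable_indicator AM)
    show "AE w in M. h (X (Suc j) w) * indicator A w = R j w * indicator A w"
      using rep[OF j] by eventually_elim simp
  qed
  also have "\<dots> = (\<integral>w. (\<Sum>k\<in>{1..j}. fk k w * g k w) + q w * h (Y (Suc j) w) \<partial>M)"
    by (rule Bochner_Integration.integral_cong)
      (simp_all only: R_def fk_def g_def q_def sum_distrib_right sum_distrib_left distrib_right distrib_left mult.assoc mult.commute mult.left_commute)
  also have "\<dots> = (\<integral>w. (\<Sum>k\<in>{1..j}. fk k w * g k w) \<partial>M) + (\<integral>w. q w * h (Y (Suc j) w) \<partial>M)"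
    by (rule Bochner_Integration.integral_add) (use int1 int2 in \<open>auto intro!: Bochner_Integration.integrable_sum\<close>)
  also have "\<dots> = (\<Sum>k\<in>{1..j}. \<integral>w. fk k w * g k w \<partial>M) + (\<integral>w. q w * h (Y (Suc j) w) \<partial>M)"
    by (subst Bochner_Integration.integral_sum) (use int1 in auto)
  also have "\<dots> = (\<Sum>k\<in>{1..j}. (\<integral>w. fk k w \<partial>M) * (1 / j * \<alpha>)) + prob A * (1 - \<alpha>) * integral\<^sup>L \<mu> h"
    using term1 term2 by simp
  also have "(\<Sum>k\<in>{1..j}. (\<integral>w. fk k w \<partial>M) * (1 / j * \<alpha>)) = \<alpha> / j * (\<Sum>k\<in>{1..j}. \<integral>w. fk k w \<partial>M)"
    by (simp add: sum_distrib_left mult_ac)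
  finally show ?thesis
    by (simp add: fk_def mult_ac)
qed

end

lemma det_step0:
  fixes S s1 a c N :: real
  assumes a: "a \<noteq> 1" and N: "N > 0"
  shows "(S + s1) / (N + 1) - c
     = (1 - (1 - a) / (N + 1)) * (S / N - c) + (1 - a) / (N + 1) * ((s1 - c - a * (S / N - c)) / (1 - a))"
proof -
  have N1: "N + 1 \<noteq> 0" using N by simp
  have a1: "1 - a \<noteq> 0" using a by simp
  have e1: "1 - (1 - a) / (N + 1) = (N + a) / (N + 1)" using N1 by (simp add: field_simps)
  have e2: "(1 - a) / (N + 1) * ((s1 - c - a * (S / N - c)) / (1 - a)) = (s1 - c - a * (S / N - c)) / (N + 1)"
    using a1 N1 by simp
  have e30: "x / (N + 1) * D + y / (N + 1) = (x * D + y) / (N + 1)" for x D y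
    by (simp add: add_divide_distrib)
  have e3: "(N + a) / (N + 1) * (S / N - c) + (s1 - c - a * (S / N - c)) / (N + 1)
      = ((N + a) * (S / N - c) + (s1 - c - a * (S / N - c))) / (N + 1)"
    by (rule e30)
  have e4: "(N + a) * (S / N - c) + (s1 - c - a * (S / N - c)) = S + s1 - (N + 1) * c"
    using N by (simp add: field_simps)
  have e5: "(S + s1) / (N + 1) - c = (S + s1 - (N + 1) * c) / (N + 1)"
    using N1 by (simp add: field_simps)
  show ?thesis unfolding e1 e2 e3 e4 e5 ..
qed

lemma det_step:
  fixes S s1 a c :: real and n :: nat
  assumes a: "a < 1" and n: "n \<ge> 1"
  shows "(S + s1) / real (Suc n) - c
     = (1 - (1 - a) / (real n + 1)) * (S / real n - c) + (1 - a) / (real n + 1) * ((s1 - c - a * (S / real n - c)) / (1 - a))"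
  using det_step0[of a "real n" S s1 c] a n by (simp add: add.commute)

lemma alg_step: fixes b b' g T e :: real
  assumes "b' > 0" "b' = b * (1 - g)"
  shows "(1 - g) * (b * T) + g * e = b' * (T + g / b' * e)"
proof -
  have h2: "b' * (T + g / b' * e) = b' * T + g * e" using assms(1) by (simp add: field_simps)
  have h1: "(1 - g) * (b * T) = b' * T" unfolding assms(2) by (simp add: algebra_simps)
  show ?thesis unfolding h1 h2 ..
qed

lemma beta_pos: "0 \<le> a \<Longrightarrow> a < 1 \<Longrightarrow> srrw_beta a n > 0"
  unfolding srrw_beta_def srrw_gamma_def
proof (intro prod_pos ballI)
  fix k assume "k \<in> {1..<n}" "0 \<le> a" "a < 1"
  then have "(1 - a) / (real k + 1) < 1" by (simp add: divide_less_eq)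
  then show "0 < 1 - (1 - a) / (real k + 1)" by simp
qed

lemma beta_Suc: "n \<ge> 1 \<Longrightarrow> srrw_beta a (Suc n) = srrw_beta a n * (1 - srrw_gamma a n)"
  unfolding srrw_beta_def by (simp add: prod.atLeastLessThan_Suc)

lemma det_rep:
  fixes s :: "nat \<Rightarrow> real" and a c :: real
  assumes a: "0 \<le> a" "a < 1" and n: "n \<ge> 1"
  shows "(\<Sum>i=1..n. s i) / real n - c = srrw_beta a n * ((s 1 - c) + (\<Sum>j\<in>{1..<n}.
           srrw_gamma a j / srrw_beta a (j+1) * ((s (j+1) - c - a * ((\<Sum>i=1..j. s i) / real j - c)) / (1 - a))))"
  using n
proof (induction n rule: nat_induct_at_least)
  case base
  then show ?case by (simp add: srrw_beta_def)
next
  case (Suc n)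
  let ?D = "\<lambda>m. (\<Sum>i=1..m. s i) / real m - c"
  let ?e = "(s (n+1) - c - a * ?D n) / (1 - a)"
  let ?T = "(s 1 - c) + (\<Sum>j\<in>{1..<n}. srrw_gamma a j / srrw_beta a (j+1) * ((s (j+1) - c - a * ?D j) / (1 - a)))"
  have bpos: "srrw_beta a (Suc n) > 0" using beta_pos a by blast
  have "?D (Suc n) = (1 - srrw_gamma a n) * ?D n + srrw_gamma a n * ?e"
    using det_step[OF a(2) Suc(1), of "\<Sum>i=1..n. s i" "s (Suc n)" c]
    by (simp add: srrw_gamma_def)
  also have "\<dots> = (1 - srrw_gamma a n) * (srrw_beta a n * ?T) + srrw_gamma a n * ?e"
    using Suc(2) by simp
  also have "\<dots> = srrw_beta a (Suc n) * (?T + srrw_gamma a n / srrw_beta a (Suc n) * ?e)"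
    by (rule alg_step[OF bpos beta_Suc[OF Suc(1)]])
  also have "\<dots> = srrw_beta a (Suc n) * ((s 1 - c) + (\<Sum>j\<in>{1..<Suc n}.
           srrw_gamma a j / srrw_beta a (j+1) * ((s (j+1) - c - a * ?D j) / (1 - a))))"
    using Suc(1) by (simp add: sum.atLeastLessThan_Suc add.assoc)
  finally show ?case .
qed

context srrw_loc
begin

definition Fl :: "nat \<Rightarrow> 'w measure" where "Fl = nat_filtration M X"
definition eps :: "nat \<Rightarrow> 'w \<Rightarrow> real" where
  "eps = (\<lambda>n w. (h (X n w) - integral\<^sup>L \<mu> h - \<alpha> * srrw_Delta \<mu> h X (n - 1) w) / (1 - \<alpha>))"

lemma Fl_gen_pow: "{X i -` A \<inter> space M | i A. i \<in> {1..n} \<and> A \<in> sets borel} \<subseteq> Pow (space M)"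
  by auto

lemma sets_Fl: "sets (Fl n) = sigma_sets (space M) {X i -` A \<inter> space M | i A. i \<in> {1..n} \<and> A \<in> sets borel}"
  unfolding Fl_def nat_filtration_def by (rule sets_measure_of[OF Fl_gen_pow])

lemma space_Fl[simp]: "space (Fl n) = space M"
  unfolding Fl_def nat_filtration_def by (rule space_measure_of[OF Fl_gen_pow])

lemma X_Fl: "i \<in> {1..n} \<Longrightarrow> X i \<in> borel_measurable (Fl n)"
proof (rule measurableI)
  fix A :: "'v set" assume "i \<in> {1..n}" "A \<in> sets borel"
  then show "X i -` A \<inter> space (Fl n) \<in> sets (Fl n)"
    unfolding sets_Fl by (intro sigma_sets.Basic) auto
qed auto

lemma Fl_Sig: assumes "k \<le> j" shows "sets (Fl k) \<subseteq> sets (Sig (past j))"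
proof -
  have "{X i -` A \<inter> space M | i A. i \<in> {1..k} \<and> A \<in> sets borel} \<subseteq> sets (Sig (past j))"
  proof safe
    fix i and A :: "'v set" assume "i \<in> {1..k}" "A \<in> sets borel"
    then show "X i -` A \<inter> space M \<in> sets (Sig (past j))"
      using measurable_sets[OF X_Sig[of i j], of A] assms by auto
  qed
  then show ?thesis unfolding sets_Fl using sigma_sets_le_sets_iff[of "Sig (past j)"] by simp
qed

lemma Fl_subalg: "subalgebra M (Fl k)"
  unfolding subalgebra_def using Fl_Sig[of k k] Sig_sets_M[OF past_sub] by auto

lemma hX_Fl: "i \<in> {1..n} \<Longrightarrow> (\<lambda>w. h (X i w)) \<in> borel_measurable (Fl n)"
  using measurable_compose[OF X_Fl h_borel] by blast

lemma Delta_Fl: "m \<le> n \<Longrightarrow> srrw_Delta \<mu> h X m \<in> borel_measurable (Fl n)"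
  unfolding srrw_Delta_def
  by (intro borel_measurable_diff borel_measurable_divide borel_measurable_sum hX_Fl measurable_const) auto

lemma Delta_int: "integrable M (srrw_Delta \<mu> h X n)"
  unfolding srrw_Delta_def
  by (intro Bochner_Integration.integrable_diff integrable_divide_zero Bochner_Integration.integrable_sum hX_int integrable_const) auto

lemma Fl_mono: assumes kn: "k \<le> n" shows "sets (Fl k) \<subseteq> sets (Fl n)"
  unfolding sets_Fl
proof (intro sigma_sets_mono' subsetI)
  fix x assume "x \<in> {X i -` A \<inter> space M | i A. i \<in> {1..k} \<and> A \<in> sets borel}"
  then obtain i A where "x = X i -` A \<inter> space M" "i \<in> {1..k}" "A \<in> sets borel" by blast
  moreover then have "i \<in> {1..n}" using kn by auto
  ultimately show "x \<in> {X i -` A \<inter> space M | i A. i \<in> {1..n} \<and> A \<in> sets borel}" by blast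
qed

lemma eps_Fl: "j \<ge> 1 \<Longrightarrow> eps j \<in> borel_measurable (Fl j)"
  unfolding eps_def
  by (intro borel_measurable_divide borel_measurable_diff borel_measurable_times hX_Fl Delta_Fl measurable_const) auto

lemma eps_int: "j \<ge> 1 \<Longrightarrow> integrable M (eps j)"
  unfolding eps_def
  by (intro integrable_divide_zero Bochner_Integration.integrable_diff integrable_mult_right Delta_int hX_int integrable_const)

lemma eps_zero:
  assumes j: "j \<ge> 1" and A: "A \<in> sets (Sig (past j))"
  shows "(\<integral>w. indicator A w * eps (Suc j) w \<partial>M) = 0"
proof -
  let ?c = "integral\<^sup>L \<mu> h"
  have AM: "A \<in> sets M" using Sig_sets_M[OF past_sub A] .
  have ia: "integrable M (\<lambda>w. h (X k w) * indicator A w)" if "k \<ge> 1" for k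
    using that by (intro integrable_real_mult_indicator AM hX_int)
  have pw: "indicator A w * eps (Suc j) w = (1 / (1 - \<alpha>)) * (h (X (Suc j) w) * indicator A w
      - \<alpha> / j * (\<Sum>k\<in>{1..j}. h (X k w) * indicator A w) - (1 - \<alpha>) * ?c * indicator A w)" for w
  proof -
    have s: "(\<Sum>k\<in>{1..j}. h (X k w) * indicator A w) = (\<Sum>k\<in>{1..j}. h (X k w)) * indicator A w"
      by (simp add: sum_distrib_right)
    have "real j > 0" "1 - \<alpha> \<noteq> 0" using j \<alpha>1 by auto
    then show ?thesis unfolding s eps_def srrw_Delta_def by (simp add: field_simps)
  qed
  have "(\<integral>w. indicator A w * eps (Suc j) w \<partial>M) = (1 / (1 - \<alpha>)) * ((\<integral>w. h (X (Suc j) w) * indicator A w \<partial>M)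
      - \<alpha> / j * (\<Sum>k\<in>{1..j}. \<integral>w. h (X k w) * indicator A w \<partial>M) - (1 - \<alpha>) * ?c * prob A)"
    unfolding pw
    apply (subst integral_mult_right_zero)
    apply (subst Bochner_Integration.integral_diff)
      apply (intro Bochner_Integration.integrable_diff ia integrable_mult_right Bochner_Integration.integrable_sum; simp)
     apply (intro integrable_mult_right ind_int AM)
    apply (subst Bochner_Integration.integral_diff)
      apply (intro ia; simp)
     apply (intro integrable_mult_right Bochner_Integration.integrable_sum ia; simp)
    apply (subst integral_mult_right_zero)+
    apply (subst Bochner_Integration.integral_sum)
     apply (intro ia; simp)
    using AM by (simp add: int_ind)
  also have "\<dots> = 0" using key[OF j A] by (simp add: algebra_simps)
  finally show ?thesis .
qed

end

context srrw_loc
begin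

lemma Fl_sfs: "sigma_finite_subalgebra M (Fl k)"
  by (intro finite_measure_subalgebra_is_sigma_finite)
    (simp add: finite_measure_subalgebra_def finite_measure_subalgebra_axioms_def finite_measure_axioms Fl_subalg)

lemma ind_mult_int: "A \<in> sets M \<Longrightarrow> integrable M f \<Longrightarrow> integrable M (\<lambda>x. indicator A x * f x :: real)"
  using integrable_real_mult_indicator[of A M f] by (simp add: mult.commute)

lemma mds: "mart_diff_seq M Fl eps"
  unfolding mart_diff_seq_def
proof (intro allI impI conjI)
  fix j :: nat assume j: "j \<ge> 1"
  show "eps (j+1) \<in> borel_measurable (Fl (j+1))" using eps_Fl j by simp
  show "integrable M (eps (j+1))" using eps_int j by simp
  interpret sigma_finite_subalgebra M "Fl j" by (rule Fl_sfs)
  have "AE w in M. real_cond_exp M (Fl j) (eps (j+1)) w = (\<lambda>_. 0) w"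
  proof (rule real_cond_exp_charact)
    fix A assume A: "A \<in> sets (Fl j)"
    then have "A \<in> sets (Sig (past j))" using Fl_Sig[of j j] by auto
    then show "(\<integral>x\<in>A. eps (j+1) x \<partial>M) = (\<integral>x\<in>A. (\<lambda>_. 0) x \<partial>M)"
      using eps_zero[OF j] by (simp add: set_lebesgue_integral_def)
  qed (use eps_int j in auto)
  then show "AE w in M. real_cond_exp M (Fl j) (eps (j+1)) w = 0" by simp
qed

lemma rep_all:
  assumes n: "n \<ge> 1"
  shows "srrw_Delta \<mu> h X n w = srrw_beta \<alpha> n * ((h (X 1 w) - integral\<^sup>L \<mu> h)
                         + (\<Sum>j\<in>{1..<n}. srrw_gamma \<alpha> j / srrw_beta \<alpha> (j+1) * eps (j+1) w))"
  using det_rep[OF \<alpha>0 \<alpha>1 n, of "\<lambda>i. h (X i w)" "integral\<^sup>L \<mu> h"]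
  by (simp add: eps_def srrw_Delta_def)

lemma condexp:
  assumes k: "1 \<le> k" and kn: "k < n"
  shows "AE w in M. real_cond_exp M (Fl k) (srrw_Delta \<mu> h X n) w
           = srrw_beta \<alpha> n / srrw_beta \<alpha> k * srrw_Delta \<mu> h X k w"
proof -
  interpret sigma_finite_subalgebra M "Fl k" by (rule Fl_sfs)
  let ?b = "srrw_beta \<alpha>" and ?g = "srrw_gamma \<alpha>" and ?D = "srrw_Delta \<mu> h X"
  have bk: "?b k > 0" using beta_pos[OF \<alpha>0 \<alpha>1] by blast
  have split: "?D n w = ?b n / ?b k * ?D k w + (\<Sum>j\<in>{k..<n}. ?b n * (?g j / ?b (j+1)) * eps (j+1) w)" for w
  proof -
    let ?T = "(h (X 1 w) - integral\<^sup>L \<mu> h) + (\<Sum>j\<in>{1..<k}. ?g j / ?b (j+1) * eps (j+1) w)"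
    have "?D n w = ?b n * (?T + (\<Sum>j\<in>{k..<n}. ?g j / ?b (j+1) * eps (j+1) w))"
    proof -
      have n1: "n \<ge> 1" using k kn by simp
      have ss: "(\<Sum>j\<in>{1..<n}. f j) = (\<Sum>j\<in>{1..<k}. f j) + (\<Sum>j\<in>{k..<n}. f j)" for f :: "nat \<Rightarrow> real"
        using k kn by (simp add: sum.atLeastLessThan_concat)
      show ?thesis unfolding rep_all[OF n1, of w] ss by (simp only: add.assoc)
    qed
    also have "\<dots> = ?b n / ?b k * (?b k * ?T) + (\<Sum>j\<in>{k..<n}. ?b n * (?g j / ?b (j+1)) * eps (j+1) w)"
      using bk by (simp add: distrib_left sum_distrib_left mult.assoc)
    also have "?b k * ?T = ?D k w" unfolding rep_all[OF k, of w] ..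
    finally show ?thesis .
  qed
  have "AE w in M. real_cond_exp M (Fl k) (?D n) w = (\<lambda>w. ?b n / ?b k * ?D k w) w"
  proof (rule real_cond_exp_charact)
    fix A assume A: "A \<in> sets (Fl k)"
    have AM: "A \<in> sets M" using A Fl_subalg unfolding subalgebra_def by blast
    have AS: "A \<in> sets (Sig (past j))" if "k \<le> j" for j using A Fl_Sig[OF that] by auto
    have "(\<integral>x\<in>A. ?D n x \<partial>M) = (\<integral>x. ?b n / ?b k * (indicator A x * ?D k x)
          + (\<Sum>j\<in>{k..<n}. ?b n * (?g j / ?b (j+1)) * (indicator A x * eps (j+1) x)) \<partial>M)"
      unfolding set_lebesgue_integral_def
      by (rule Bochner_Integration.integral_cong) (simp_all add: split algebra_simps sum_distrib_left)
    also have "\<dots> = ?b n / ?b k * (\<integral>x. indicator A x * ?D k x \<partial>M)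
          + (\<Sum>j\<in>{k..<n}. ?b n * (?g j / ?b (j+1)) * (\<integral>x. indicator A x * eps (j+1) x \<partial>M))"
      apply (subst Bochner_Integration.integral_add)
        apply (intro integrable_mult_right ind_mult_int AM Delta_int)
       apply (intro Bochner_Integration.integrable_sum integrable_mult_right ind_mult_int AM eps_int; use k in simp)
      apply (subst Bochner_Integration.integral_sum)
       apply (intro integrable_mult_right ind_mult_int AM eps_int; use k in simp)
      apply simp
      done
    also have "\<dots> = ?b n / ?b k * (\<integral>x. indicator A x * ?D k x \<partial>M)"
    proof -
      have "(\<integral>x. indicator A x * eps (j+1) x \<partial>M) = 0" if "j \<in> {k..<n}" for j
        using eps_zero[of j A] AS[of j] that k by simp
      then show ?thesis by simp
    qed
    also have "\<dots> = (\<integral>x\<in>A. (\<lambda>w. ?b n / ?b k * ?D k w) x \<partial>M)"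
      unfolding set_lebesgue_integral_def by (simp add: algebra_simps)
    finally show "(\<integral>x\<in>A. ?D n x \<partial>M) = (\<integral>x\<in>A. (\<lambda>w. ?b n / ?b k * ?D k w) x \<partial>M)" .
  next
    show "integrable M (?D n)" by (rule Delta_int)
    show "integrable M (\<lambda>w. ?b n / ?b k * ?D k w)" by (intro integrable_mult_right Delta_int)
    show "(\<lambda>w. ?b n / ?b k * ?D k w) \<in> borel_measurable (Fl k)"
      by (intro borel_measurable_times measurable_const Delta_Fl order_refl) simp
  qed
  then show ?thesis by simp
qed

end

theorem lemma3p3:
  fixes M :: "'w measure" and \<mu> :: "(real ^ 'd) measure" and \<alpha> :: real
    and Y :: "nat \<Rightarrow> 'w \<Rightarrow> real ^ 'd" and \<xi> :: "nat \<Rightarrow> 'w \<Rightarrow> bool" and U :: "nat \<Rightarrow> 'w \<Rightarrow> nat"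
    and X :: "nat \<Rightarrow> 'w \<Rightarrow> real ^ 'd" and h :: "real ^ 'd \<Rightarrow> real"
  assumes M: "prob_space M"
    and \<alpha>: "0 \<le> \<alpha>" "\<alpha> < 1"
    and Y_meas: "\<And>n. n \<ge> 1 \<Longrightarrow> Y n \<in> borel_measurable M"
    and \<xi>_meas: "\<And>n. n \<ge> 2 \<Longrightarrow> \<xi> n \<in> measurable M (count_space UNIV)"
    and U_meas: "\<And>n. n \<ge> 1 \<Longrightarrow> U n \<in> measurable M (count_space UNIV)"
    and Y_distr: "\<And>n. n \<ge> 1 \<Longrightarrow> distr M borel (Y n) = \<mu>"
    and \<xi>_distr: "\<And>n. n \<ge> 2 \<Longrightarrow> distr M (count_space UNIV) (\<xi> n) = measure_pmf (bernoulli_pmf \<alpha>)"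
    and U_distr: "\<And>n. n \<ge> 1 \<Longrightarrow> distr M (count_space UNIV) (U n) = measure_pmf (pmf_of_set {1..n})"
    and indep: "srrw_drivers_indep M Y \<xi> U"
    and X_def: "X = srrw_X Y \<xi> U"
    and mom: "integrable \<mu> (\<lambda>x. norm x)"
    and mean0: "(\<integral>x. x \<partial>\<mu>) = 0"
    and h: "integrable \<mu> h"
  defines "F \<equiv> nat_filtration M X"
    and "\<Delta> \<equiv> srrw_Delta \<mu> h X"
    and "\<gamma> \<equiv> srrw_gamma \<alpha>"
    and "\<beta> \<equiv> srrw_beta \<alpha>"
    and "\<epsilon> \<equiv> (\<lambda>n w. (h (X n w) - integral\<^sup>L \<mu> h - \<alpha> * srrw_Delta \<mu> h X (n - 1) w) / (1 - \<alpha>))"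
  shows "mart_diff_seq M F \<epsilon>
    \<and> (\<forall>n\<ge>1. \<forall>w\<in>space M.
          \<Delta> n w = \<beta> n * ((h (X 1 w) - integral\<^sup>L \<mu> h)
                         + (\<Sum>j\<in>{1..<n}. \<gamma> j / \<beta> (j+1) * \<epsilon> (j+1) w)))
    \<and> (\<forall>n k. 1 \<le> k \<and> k < n \<longrightarrow>
          (AE w in M. real_cond_exp M (F k) (\<Delta> n) w = \<beta> n / \<beta> k * \<Delta> k w))"
proof -
  interpret S: srrw_loc M \<mu> \<alpha> Y \<xi> U h
    unfolding srrw_loc_def srrw_loc_axioms_def
    using M \<alpha> Y_meas \<xi>_meas U_meas Y_distr \<xi>_distr U_distr indep h
    by (simp add: srrw_drivers_indep_def drvE_def)
  have FF: "F = S.Fl" unfolding F_def S.Fl_def X_def ..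
  have EE: "\<epsilon> = S.eps" unfolding \<epsilon>_def S.eps_def X_def ..
  show ?thesis
    unfolding FF EE \<Delta>_def \<beta>_def \<gamma>_def X_def
    using S.mds S.rep_all S.condexp by blast
qed

end
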